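(* Let $\boldsymbol\mu$ be a ratio set and let $\boldsymbol\alpha$ be a derivative addendum for $\boldsymbol\mu$. Let $\sum_{i\in I}T_i$ be $\boldsymbol\mu$-convergent. Then $\sum_{i\in I}T_i'$ is $\boldsymbol\alpha$-convergent.
   Context: $\mathbb T$ is the differential field of real grid-based transseries over the ordered group $\mathfrak G$ of transmonomials; $\operatorname{mag}T$ is the dominant monomial of $T\ne0$. A ratio set is a finite $\boldsymbol\mu=\{\mu_1,\dots,\mu_n\}\subset\{\mathfrak g\prec1\}$; $\boldsymbol\mu^*$, $\boldsymbol\mu^+$ are the sets $\boldsymbol\mu^{\mathbf k}$ with $\mathbf k\in\mathbb Z^n$, $\mathbf k\ge\mathbf 0$ (resp. additionally $\mathbf k\ne\mathbf0$); $\mathfrak J^{\boldsymbol\mu}$ is the group generated, $\mathfrak J^{\boldsymbol\mu,\mathbf m}=\{\boldsymbol\mu^{\mathbf k}:\mathbf k\ge\mathbf m\}$ (a grid). Monomials: $\mathfrak m\prec^{\boldsymbol\mu}\mathfrak n$ iff $\mathfrak m/\mathfrak n\in\boldsymbol\mu^+$; transseries: $A\prec^{\boldsymbol\mu}B$ iff each $\mathfrak a\in\operatorname{supp}A$ is $\prec^{\boldsymbol\mu}$ some $\mathfrak b\in\operatorname{supp}B$. $\boldsymbol\alpha$ witnesses nonzero $T$ iff $\operatorname{supp}T\subseteq(\operatorname{mag}T)\boldsymbol\alpha^*$, and generates $T$ iff $\operatorname{supp}T\subseteq\mathfrak J^{\boldsymbol\alpha,\mathbf m}$ for some $\mathbf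 m$. A derivative addendum for $\boldsymbol\mu$ is a ratio set $\boldsymbol\alpha$ with: (a) $\boldsymbol\alpha^*\supseteq\boldsymbol\mu$; (b) for every $\mathfrak m\in\mathfrak J^{\boldsymbol\mu}$, $\mathfrak m'$ is witnessed and generated by $\boldsymbol\alpha$; (c) for all $\mathfrak m,\mathfrak n\in\mathfrak J^{\boldsymbol\mu}$ with $\mathfrak m\prec^{\boldsymbol\mu}\mathfrak n$, $\mathfrak n\ne1$: $\mathfrak m'\prec^{\boldsymbol\alpha}\operatorname{mag}(\mathfrak n')$. A family $\sum_{i\in I}T_i$ is $\boldsymbol\mu$-convergent if all $T_i$ are supported by a single grid $\mathfrak J^{\boldsymbol\mu,\mathbf m}$ and the family is point-finite (each monomial lies in $\operatorname{supp}T_i$ for only finitely many $i$). *)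

theory Defs
  imports Complex_Main
begin

text \<open>The (multiplicative) ordered group of transmonomials is written
  additively as a linearly ordered abelian group 'g: the monomial 1 is 0, the product
  of monomials is +, the quotient m/n is m - n, and m \<prec> 1 means m < 0.
  A (real) series is a coefficient function 'g \<Rightarrow> real; its support is the set of
  monomials with nonzero coefficient.\<close>

definition zmul :: "int \<Rightarrow> 'g::ab_group_add \<Rightarrow> 'g" where
  "zmul k x = (if 0 \<le> k then (\<Sum>_\<in>{..<nat k}. x) else - (\<Sum>_\<in>{..<nat (- k)}. x))"

definition supp :: "('g \<Rightarrow> real) \<Rightarrow> 'g set" where
  "supp T = {g. T g \<noteq> 0}"

definition mag :: "('g::linorder \<Rightarrow> real) \<Rightarrow> 'g" where
  "mag T = (THE m. m \<in> supp T \<and> (\<forall>n\<in>supp T. n \<le> m))"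

text \<open>A ratio set {mu_1,...,mu_n} is represented by the list [mu_1,...,mu_n];
  exponent vectors are functions k :: nat \<Rightarrow> int, only indices i < n matter.\<close>
definition ratio_set :: "'g::linordered_ab_group_add list \<Rightarrow> bool" where
  "ratio_set \<mu> \<longleftrightarrow> (\<forall>x\<in>set \<mu>. x < 0)"

definition mpow :: "'g::ab_group_add list \<Rightarrow> (nat \<Rightarrow> int) \<Rightarrow> 'g" where
  "mpow \<mu> k = (\<Sum>i<length \<mu>. zmul (k i) (\<mu> ! i))"

definition rstar :: "'g::ab_group_add list \<Rightarrow> 'g set" where
  "rstar \<mu> = {mpow \<mu> k | k. \<forall>i<length \<mu>. 0 \<le> k i}"

definition rplus :: "'g::ab_group_add list \<Rightarrow> 'g set" where
  "rplus \<mu> = {mpow \<mu> k | k. (\<forall>i<length \<mu>. 0 \<le> k i) \<and> (\<exists>i<length \<mu>. k i \<noteq> 0)}"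

definition rgroup :: "'g::ab_group_add list \<Rightarrow> 'g set" where
  "rgroup \<mu> = {mpow \<mu> k | k. True}"

definition rgrid :: "'g::ab_group_add list \<Rightarrow> (nat \<Rightarrow> int) \<Rightarrow> 'g set" where
  "rgrid \<mu> m = {mpow \<mu> k | k. \<forall>i<length \<mu>. m i \<le> k i}"

definition mprec :: "'g::ab_group_add list \<Rightarrow> 'g \<Rightarrow> 'g \<Rightarrow> bool" where
  "mprec \<mu> m n \<longleftrightarrow> m - n \<in> rplus \<mu>"

definition sprec :: "'g::ab_group_add list \<Rightarrow> ('g \<Rightarrow> real) \<Rightarrow> ('g \<Rightarrow> real) \<Rightarrow> bool" where
  "sprec \<mu> A B \<longleftrightarrow> (\<forall>a\<in>supp A. \<exists>b\<in>supp B. mprec \<mu> a b)"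

definition monom :: "'g \<Rightarrow> ('g \<Rightarrow> real)" where
  "monom m = (\<lambda>g. if g = m then 1 else 0)"

definition witnesses :: "'g::linordered_ab_group_add list \<Rightarrow> ('g \<Rightarrow> real) \<Rightarrow> bool" where
  "witnesses \<alpha> T \<longleftrightarrow> supp T \<subseteq> (\<lambda>x. mag T + x) ` rstar \<alpha>"

definition generates :: "'g::ab_group_add list \<Rightarrow> ('g \<Rightarrow> real) \<Rightarrow> bool" where
  "generates \<alpha> T \<longleftrightarrow> (\<exists>m. supp T \<subseteq> rgrid \<alpha> m)"

text \<open>Derivation of the transseries field, given by the derivatives d m of the monomials
  (d m = m'): the Leibniz rule (mn)' = m'n + mn' (multiplication of a series by a
  monomial n is the shift by n), and m' \<noteq> 0 for m \<noteq> 1.\<close>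
definition shift :: "'g::ab_group_add \<Rightarrow> ('g \<Rightarrow> real) \<Rightarrow> ('g \<Rightarrow> real)" where
  "shift n T = (\<lambda>g. T (g - n))"

definition monomial_derivation :: "('g::linordered_ab_group_add \<Rightarrow> ('g \<Rightarrow> real)) \<Rightarrow> bool" where
  "monomial_derivation d \<longleftrightarrow>
     (\<forall>m n g. d (m + n) g = shift n (d m) g + shift m (d n) g) \<and>
     (\<forall>m. m \<noteq> 0 \<longrightarrow> supp (d m) \<noteq> {})"

definition sderiv :: "('g \<Rightarrow> ('g \<Rightarrow> real)) \<Rightarrow> ('g \<Rightarrow> real) \<Rightarrow> ('g \<Rightarrow> real)" where
  "sderiv d T = (\<lambda>g. \<Sum>m\<in>{m. m \<in> supp T \<and> d m g \<noteq> 0}. T m * d m g)"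

definition derivative_addendum ::
  "('g::linordered_ab_group_add \<Rightarrow> ('g \<Rightarrow> real)) \<Rightarrow> 'g list \<Rightarrow> 'g list \<Rightarrow> bool" where
  "derivative_addendum d \<mu> \<alpha> \<longleftrightarrow>
     ratio_set \<alpha> \<and>
     set \<mu> \<subseteq> rstar \<alpha> \<and>
     (\<forall>m\<in>rgroup \<mu>. witnesses \<alpha> (d m) \<and> generates \<alpha> (d m)) \<and>
     (\<forall>m\<in>rgroup \<mu>. \<forall>n\<in>rgroup \<mu>. mprec \<mu> m n \<and> n \<noteq> 0 \<longrightarrow>
         sprec \<alpha> (d m) (monom (mag (d n))))"

definition ratio_convergent :: "'g::ab_group_add list \<Rightarrow> ('i \<Rightarrow> 'g \<Rightarrow> real) \<Rightarrow> 'i set \<Rightarrow> bool" where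
  "ratio_convergent \<mu> T I \<longleftrightarrow>
     (\<exists>m. \<forall>i\<in>I. supp (T i) \<subseteq> rgrid \<mu> m) \<and>
     (\<forall>g. finite {i\<in>I. g \<in> supp (T i)})"

end

theory Submission imports Defs begin

definition nm :: "nat \<Rightarrow> 'g::ab_group_add \<Rightarrow> 'g" where
  "nm n x = (\<Sum>_\<in>{..<n}. x)"

lemma nm_0[simp]: "nm 0 x = 0" by (simp add: nm_def)
lemma nm_Suc[simp]: "nm (Suc n) x = nm n x + x" by (simp add: nm_def)
lemma nm_add: "nm (a+b) x = nm a x + nm b x"
  by (induction b) (simp_all add: algebra_simps)
lemma nm_arg_add: "nm n (x+y) = nm n x + nm n y"
  by (induction n) (simp_all add: algebra_simps)
lemma nm_arg_minus: "nm n (-x) = - nm n x"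
  by (induction n) (simp_all add: algebra_simps)
lemma nm_arg_diff: "nm n (x-y) = nm n x - nm n y"
  by (metis diff_conv_add_uminus nm_arg_add nm_arg_minus)
lemma nm_arg_0[simp]: "nm n 0 = 0"
  by (induction n) simp_all
lemma nm_mult: "nm (a*b) x = nm a (nm b x)"
  by (induction a) (simp_all add: nm_add nm_arg_add algebra_simps)
lemma nm_nonpos: "(x::'g::linordered_ab_group_add) \<le> 0 \<Longrightarrow> nm n x \<le> 0"
  by (induction n) (simp_all add: add_nonpos_nonpos)

lemma zmul_nm: "zmul k x = (if 0 \<le> k then nm (nat k) x else - nm (nat (-k)) x)"
  by (simp add: zmul_def nm_def)

lemma zmul_diff: "zmul (int a - int b) x = nm a x - nm b x"
proof (cases "b \<le> a")
  case True
  then have e: "int a - int b = int (a - b)" by simp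
  have z: "zmul (int (a-b)) x = nm (a-b) x" by (simp add: zmul_def nm_def)
  have "nm a x = nm (a-b) x + nm b x" using True nm_add[of "a-b" b x] by simp
  then show ?thesis unfolding e z by (simp add: algebra_simps)
next
  case False
  then have e: "int a - int b = - int (b - a)" by simp
  have z: "zmul (- int (b-a)) x = - nm (b-a) x"
  proof -
    have "nat (int (b-a)) = b - a" by simp
    then show ?thesis using False by (simp add: zmul_def nm_def del: of_nat_diff)
  qed
  have "nm b x = nm (b-a) x + nm a x" using False nm_add[of "b-a" a x] by simp
  then show ?thesis unfolding e z by (simp add: algebra_simps)
qed

lemma int_rep: "k = int (nat k) - int (nat (-k))" by simp

lemma zmul_add: "zmul (a+b) x = zmul a x + zmul b x"
proof -
  have e: "int (nat a + nat b) - int (nat (-a) + nat (-b)) = a + b" by simp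
  have "zmul (a+b) x = nm (nat a + nat b) x - nm (nat (-a) + nat (-b)) x"
    using zmul_diff[of "nat a + nat b" "nat (-a) + nat (-b)" x] by (simp only: e)
  moreover have "zmul a x = nm (nat a) x - nm (nat (-a)) x" using zmul_diff[of "nat a" "nat (-a)" x] by (simp only: int_rep[symmetric])
  moreover have "zmul b x = nm (nat b) x - nm (nat (-b)) x" using zmul_diff[of "nat b" "nat (-b)" x] by (simp only: int_rep[symmetric])
  moreover have "nm (nat a + nat b) x - nm (nat (-a) + nat (-b)) x
     = (nm (nat a) x - nm (nat (-a)) x) + (nm (nat b) x - nm (nat (-b)) x)"
    by (simp add: nm_add algebra_simps)
  ultimately show ?thesis by simp
qed

lemma zmul_arg_add: "zmul k (x+y) = zmul k x + zmul k y"
  unfolding zmul_nm nm_arg_add by (simp add: add.commute)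

lemma zmul_0[simp]: "zmul 0 x = 0" by (simp add: zmul_nm)
lemma zmul_1[simp]: "zmul 1 x = x" by (simp add: zmul_nm nm_def)
lemma zmul_arg_0[simp]: "zmul k 0 = 0" by (simp add: zmul_nm)
lemma zmul_uminus: "zmul (-k) x = - zmul k x"
proof -
  have "zmul (k + -k) x = zmul k x + zmul (-k) x" by (rule zmul_add)
  then have "0 = zmul k x + zmul (-k) x" by simp
  then show ?thesis by (metis add.commute add_eq_0_iff2 minus_unique)
qed

lemma zmul_mult: "zmul (a*b) x = zmul a (zmul b x)"
proof -
  define p where "p = nat a" define q where "q = nat (-a)"
  define p' where "p' = nat b" define q' where "q' = nat (-b)"
  have a: "a = int p - int q" and b: "b = int p' - int q'" unfolding p_def q_def p'_def q'_def by simp_all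
  have "a*b = int (p*p' + q*q') - int (p*q' + q*p')" unfolding a b by (simp add: algebra_simps)
  then have "zmul (a*b) x = nm (p*p' + q*q') x - nm (p*q' + q*p') x" by (metis zmul_diff)
  moreover have "zmul a (zmul b x) = nm p (nm p' x - nm q' x) - nm q (nm p' x - nm q' x)"
    unfolding a b zmul_diff by simp
  moreover have "nm p (nm p' x - nm q' x) - nm q (nm p' x - nm q' x)
     = nm (p*p') x - nm (p*q') x - (nm (q*p') x - nm (q*q') x)"
    by (simp add: nm_arg_diff nm_mult)
  moreover have "nm (p * p' + q * q') x - nm (p * q' + q * p') x
     = nm (p*p') x - nm (p*q') x - (nm (q*p') x - nm (q*q') x)"
    by (simp add: nm_add algebra_simps)
  ultimately show ?thesis by simp
qed

lemma zmul_mono: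
  fixes x :: "'g::linordered_ab_group_add"
  assumes "x \<le> 0" "k \<le> k'" shows "zmul k' x \<le> zmul k x"
proof -
  have "zmul k' x = zmul k x + zmul (k'-k) x" using zmul_add[of k "k'-k" x] by simp
  moreover have "zmul (k'-k) x \<le> 0" using assms by (simp add: zmul_nm nm_nonpos)
  ultimately show ?thesis by simp
qed

lemma zmul_sum: "zmul k (sum f A) = (\<Sum>a\<in>A. zmul k (f a))"
  by (induction A rule: infinite_finite_induct) (simp_all add: zmul_arg_add)


lemma mpow_add: "mpow \<alpha> (\<lambda>i. a i + b i) = mpow \<alpha> a + mpow \<alpha> b"
  by (simp add: mpow_def zmul_add sum.distrib)

lemma mpow_zero: "mpow \<alpha> (\<lambda>i. 0) = 0"
  by (simp add: mpow_def)

lemma mpow_neg: "mpow \<alpha> (\<lambda>i. - c i) = - mpow \<alpha> c"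
  by (simp add: mpow_def zmul_uminus sum_negf)

lemma zmul_mpow: "zmul k (mpow \<alpha> c) = mpow \<alpha> (\<lambda>i. k * c i)"
  by (simp add: mpow_def zmul_sum zmul_mult)

lemma mpow_unit:
  assumes "j < length \<mu>"
  shows "mpow \<mu> (\<lambda>i. if i = j then 1 else 0) = \<mu> ! j"
proof -
  have "mpow \<mu> (\<lambda>i. if i = j then 1 else 0) = (\<Sum>i<length \<mu>. if i = j then \<mu> ! i else 0)"
    unfolding mpow_def by (rule sum.cong) auto
  also have "\<dots> = \<mu> ! j" using assms by (simp add: sum.delta)
  finally show ?thesis .
qed

lemma mpow_cong: "(\<And>i. i < length \<alpha> \<Longrightarrow> a i = b i) \<Longrightarrow> mpow \<alpha> a = mpow \<alpha> b"
  unfolding mpow_def by (rule sum.cong) auto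

lemma mpow_Cons: "mpow (x # \<alpha>) k = zmul (k 0) x + mpow \<alpha> (\<lambda>i. k (Suc i))"
  unfolding mpow_def by (simp only: length_Cons sum.lessThan_Suc_shift nth_Cons_0 nth_Cons_Suc)

lemma rgrid_mono: "(\<And>i. i < length \<alpha> \<Longrightarrow> m i \<le> m' i) \<Longrightarrow> rgrid \<alpha> m' \<subseteq> rgrid \<alpha> m"
  unfolding rgrid_def by force

lemma rgrid_add:
  assumes "a \<in> rgrid \<alpha> m" "b \<in> rgrid \<alpha> m'"
  shows "a + b \<in> rgrid \<alpha> (\<lambda>i. m i + m' i)"
proof -
  obtain k where k: "a = mpow \<alpha> k" "\<forall>i<length \<alpha>. m i \<le> k i" using assms(1) unfolding rgrid_def by blast
  obtain k' where k': "b = mpow \<alpha> k'" "\<forall>i<length \<alpha>. m' i \<le> k' i" using assms(2) unfolding rgrid_def by blast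
  have "a + b = mpow \<alpha> (\<lambda>i. k i + k' i)" using k k' by (simp add: mpow_add)
  moreover have "\<forall>i<length \<alpha>. m i + m' i \<le> k i + k' i" using k k' by (simp add: add_mono)
  ultimately show ?thesis unfolding rgrid_def by blast
qed

lemma rgrid_mpow: "mpow \<alpha> c \<in> rgrid \<alpha> c"
  unfolding rgrid_def by blast

lemma sum_rgrid:
  assumes "finite J" "\<forall>j\<in>J. f j \<in> rgrid \<alpha> (b j)"
  shows "sum f J \<in> rgrid \<alpha> (\<lambda>i. \<Sum>j\<in>J. b j i)"
  using assms
proof (induction J rule: finite_induct)
  case empty
  show ?case using rgrid_mpow[of \<alpha> "\<lambda>i. 0"] by (simp add: mpow_zero)
next
  case (insert j J)
  then have "f j + sum f J \<in> rgrid \<alpha> (\<lambda>i. b j i + (\<Sum>j\<in>J. b j i))"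
    by (intro rgrid_add) auto
  then show ?case using insert by simp
qed

lemma zmul_rstar_rgrid:
  assumes "\<forall>i<length \<alpha>. 0 \<le> c i" "k0 \<le> k"
  shows "zmul k (mpow \<alpha> c) \<in> rgrid \<alpha> (\<lambda>i. k0 * c i)"
proof -
  have "\<forall>i<length \<alpha>. k0 * c i \<le> k * c i" using assms by (simp add: mult_right_mono)
  then show ?thesis unfolding zmul_mpow rgrid_def by blast
qed

definition ingrid :: "'g::ab_group_add list \<Rightarrow> 'g set \<Rightarrow> bool" where
  "ingrid \<alpha> A \<longleftrightarrow> (\<exists>m. A \<subseteq> rgrid \<alpha> m)"

lemma ingrid_subset: "ingrid \<alpha> B \<Longrightarrow> A \<subseteq> B \<Longrightarrow> ingrid \<alpha> A"
  unfolding ingrid_def by blast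

lemma ingrid_Un: "ingrid \<alpha> A \<Longrightarrow> ingrid \<alpha> B \<Longrightarrow> ingrid \<alpha> (A \<union> B)"
proof -
  assume "ingrid \<alpha> A" "ingrid \<alpha> B"
  then obtain m m' where "A \<subseteq> rgrid \<alpha> m" "B \<subseteq> rgrid \<alpha> m'" unfolding ingrid_def by blast
  moreover have "rgrid \<alpha> m \<subseteq> rgrid \<alpha> (\<lambda>i. min (m i) (m' i))" by (rule rgrid_mono) simp
  moreover have "rgrid \<alpha> m' \<subseteq> rgrid \<alpha> (\<lambda>i. min (m i) (m' i))" by (rule rgrid_mono) simp
  ultimately show ?thesis unfolding ingrid_def by blast
qed

lemma ingrid_empty: "ingrid \<alpha> {}" unfolding ingrid_def by blast

lemma ingrid_UN: "finite J \<Longrightarrow> (\<And>j. j \<in> J \<Longrightarrow> ingrid \<alpha> (A j)) \<Longrightarrow> ingrid \<alpha> (\<Union>j\<in>J. A j)"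
  by (induction J rule: finite_induct) (auto intro: ingrid_Un ingrid_empty)

lemma ingrid_plus:
  assumes "ingrid \<alpha> A" "ingrid \<alpha> B"
  shows "ingrid \<alpha> {a + b | a b. a \<in> A \<and> b \<in> B}"
proof -
  obtain m m' where "A \<subseteq> rgrid \<alpha> m" "B \<subseteq> rgrid \<alpha> m'" using assms unfolding ingrid_def by blast
  then have "{a + b | a b. a \<in> A \<and> b \<in> B} \<subseteq> rgrid \<alpha> (\<lambda>i. m i + m' i)"
    using rgrid_add by blast
  then show ?thesis unfolding ingrid_def by blast
qed

lemma ingrid_translate:
  assumes "ingrid \<alpha> A"
  shows "ingrid \<alpha> ((\<lambda>g. g + mpow \<alpha> c) ` A)"
proof -
  obtain m where "A \<subseteq> rgrid \<alpha> m" using assms unfolding ingrid_def by blast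
  then have "(\<lambda>g. g + mpow \<alpha> c) ` A \<subseteq> rgrid \<alpha> (\<lambda>i. m i + c i)"
    using rgrid_add[OF _ rgrid_mpow] by blast
  then show ?thesis unfolding ingrid_def by blast
qed


definition rwo :: "'a::linorder set \<Rightarrow> bool" where
  "rwo A \<longleftrightarrow> \<not> (\<exists>f. (\<forall>n. f n \<in> A) \<and> (\<forall>n. f n < f (Suc n)))"

lemma rwo_subset: "rwo B \<Longrightarrow> A \<subseteq> B \<Longrightarrow> rwo A"
  unfolding rwo_def by blast

lemma rwo_max:
  assumes "rwo A" "Y \<subseteq> A" "Y \<noteq> {}"
  shows "\<exists>y\<in>Y. \<forall>z\<in>Y. z \<le> y"
proof (rule ccontr)
  assume "\<not> ?thesis"
  then have "\<forall>y\<in>Y. \<exists>z\<in>Y. y < z" by (meson not_le)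
  then obtain nx where nx: "\<forall>y\<in>Y. nx y \<in> Y \<and> y < nx y" by metis
  obtain y0 where y0: "y0 \<in> Y" using assms(3) by blast
  define f where "f n = (nx ^^ n) y0" for n
  have fY: "f n \<in> Y" for n by (induction n) (simp_all add: f_def y0 nx)
  have "f n < f (Suc n)" for n using nx fY[of n] by (simp add: f_def)
  then have "\<exists>f. (\<forall>n. f n \<in> A) \<and> (\<forall>n. f n < f (Suc n))"
    using fY assms(2) by (intro exI[of _ f]) blast
  then show False using assms(1) unfolding rwo_def by blast
qed

lemma strict_from_Suc:
  fixes f :: "nat \<Rightarrow> 'a::linorder"
  assumes "\<forall>n. f n < f (Suc n)" "m < n" shows "f m < f n"
  using assms lift_Suc_mono_less[of f m n] by blast

lemma rwo_plus:
  fixes A B :: "'g::linordered_ab_group_add set"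
  assumes A: "rwo A" and B: "rwo B"
  shows "rwo {a + b | a b. a \<in> A \<and> b \<in> B}"
  unfolding rwo_def
proof
  assume "\<exists>f. (\<forall>n. f n \<in> {a + b | a b. a \<in> A \<and> b \<in> B}) \<and> (\<forall>n. f n < f (Suc n))"
  then obtain f where f: "\<forall>n. f n \<in> {a + b | a b. a \<in> A \<and> b \<in> B}" "\<forall>n. f n < f (Suc n)" by blast
  have "\<forall>n. \<exists>p. fst p \<in> A \<and> snd p \<in> B \<and> f n = fst p + snd p"
  proof
    fix n
    obtain a b where "f n = a + b" "a \<in> A" "b \<in> B" using f(1) by blast
    then show "\<exists>p. fst p \<in> A \<and> snd p \<in> B \<and> f n = fst p + snd p" by (intro exI[of _ "(a,b)"]) simp
  qed
  then obtain p where p: "\<And>n. fst (p n) \<in> A \<and> snd (p n) \<in> B \<and> f n = fst (p n) + snd (p n)"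
    by (rule choice[THEN exE]) blast
  define a where "a n = fst (p n)" for n
  define b where "b n = snd (p n)" for n
  have ab: "a n \<in> A" "b n \<in> B" "f n = a n + b n" for n using p[of n] by (auto simp: a_def b_def)
  obtain r where r: "strict_mono r" "monoseq (\<lambda>n. a (r n))" using seq_monosub by blast
  have fr: "f (r n) < f (r (Suc n))" for n
    using strict_from_Suc[OF f(2)] r(1) by (simp add: strict_mono_def)
  from r(2) show False unfolding monoseq_def
  proof
    assume dec: "\<forall>m. \<forall>n\<ge>m. a (r n) \<le> a (r m)"
    have "b (r n) < b (r (Suc n))" for n
    proof -
      have "a (r (Suc n)) \<le> a (r n)" using dec by simp
      show ?thesis
      proof (rule ccontr)
        assume "\<not> b (r n) < b (r (Suc n))"
        then have "b (r (Suc n)) \<le> b (r n)" by simp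
        then have "a (r (Suc n)) + b (r (Suc n)) \<le> a (r n) + b (r n)"
          using \<open>a (r (Suc n)) \<le> a (r n)\<close> by (rule add_mono[rotated])
        then show False using fr[of n] ab(3)[of "r n"] ab(3)[of "r (Suc n)"] by simp
      qed
    qed
    then have "\<exists>f. (\<forall>n. f n \<in> B) \<and> (\<forall>n. f n < f (Suc n))"
      using ab(2) by (intro exI[of _ "\<lambda>n. b (r n)"]) simp
    then show False using B unfolding rwo_def by blast
  next
    assume inc: "\<forall>m. \<forall>n\<ge>m. a (r m) \<le> a (r n)"
    obtain y where y: "y \<in> range (\<lambda>n. a (r n))" "\<forall>z\<in>range (\<lambda>n. a (r n)). z \<le> y"
      using rwo_max[OF A, of "range (\<lambda>n. a (r n))"] ab(1) by blast
    then obtain N where N: "y = a (r N)" by blast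
    have eq: "a (r n) = y" if "N \<le> n" for n
    proof -
      have "a (r N) \<le> a (r n)" using inc that by blast
      moreover have "a (r n) \<le> y" using y(2) by blast
      ultimately show ?thesis using N by simp
    qed
    have "b (r (N + n)) < b (r (N + Suc n))" for n
      using fr[of "N+n"] ab(3)[of "r (N+n)"] ab(3)[of "r (Suc (N+n))"] eq[of "N+n"] eq[of "Suc (N+n)"]
      by simp
    then have "\<exists>f. (\<forall>n. f n \<in> B) \<and> (\<forall>n. f n < f (Suc n))"
      using ab(2) by (intro exI[of _ "\<lambda>n. b (r (N + n))"]) simp
    then show False using B unfolding rwo_def by blast
  qed
qed

lemma rwo_gen:
  fixes x :: "'g::linordered_ab_group_add"
  assumes "x < 0"
  shows "rwo {zmul k x | k. k0 \<le> k}"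
  unfolding rwo_def
proof
  assume "\<exists>f. (\<forall>n. f n \<in> {zmul k x | k. k0 \<le> k}) \<and> (\<forall>n. f n < f (Suc n))"
  then obtain f where f: "\<forall>n. f n \<in> {zmul k x | k. k0 \<le> k}" "\<forall>n. f n < f (Suc n)" by blast
  then have "\<forall>n. \<exists>k. f n = zmul k x \<and> k0 \<le> k" by blast
  then obtain k where k: "\<And>n. f n = zmul (k n) x \<and> k0 \<le> k n"
    by (rule choice[THEN exE]) blast
  have step: "k (Suc n) < k n" for n
  proof (rule ccontr)
    assume "\<not> k (Suc n) < k n"
    then have "zmul (k (Suc n)) x \<le> zmul (k n) x" using zmul_mono[of x "k n" "k (Suc n)"] assms by simp
    moreover have "f n < f (Suc n)" using f(2) by blast
    ultimately show False using k[of n] k[of "Suc n"] by simp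
  qed
  have "k n \<le> k 0 - int n" for n
  proof (induction n)
    case (Suc n) then show ?case using step[of n] by simp
  qed simp
  then have "k (Suc (nat (k 0 - k0))) \<le> k 0 - int (Suc (nat (k 0 - k0)))" .
  moreover have "k0 \<le> k 0" "k0 \<le> k (Suc (nat (k 0 - k0)))" using k by blast+
  ultimately show False by linarith
qed

lemma rgrid_Cons_sub:
  "rgrid (x # \<alpha>) m \<subseteq> {a + b | a b. a \<in> {zmul k x | k. m 0 \<le> k} \<and> b \<in> rgrid \<alpha> (\<lambda>i. m (Suc i))}"
proof
  fix g assume "g \<in> rgrid (x # \<alpha>) m"
  then obtain k where k: "g = mpow (x # \<alpha>) k" "\<forall>i<length (x#\<alpha>). m i \<le> k i" unfolding rgrid_def by blast
  have "g = zmul (k 0) x + mpow \<alpha> (\<lambda>i. k (Suc i))" using k(1) mpow_Cons by simp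
  moreover have "m 0 \<le> k 0" using k(2) by simp
  moreover have "mpow \<alpha> (\<lambda>i. k (Suc i)) \<in> rgrid \<alpha> (\<lambda>i. m (Suc i))"
  proof -
    have "\<forall>i<length \<alpha>. m (Suc i) \<le> k (Suc i)" using k(2) by simp
    then show ?thesis unfolding rgrid_def by blast
  qed
  ultimately show "g \<in> {a + b | a b. a \<in> {zmul k x | k. m 0 \<le> k} \<and> b \<in> rgrid \<alpha> (\<lambda>i. m (Suc i))}"
    by blast
qed

lemma rwo_rgrid: "ratio_set (\<alpha>::'g::linordered_ab_group_add list) \<Longrightarrow> rwo (rgrid \<alpha> m)"
proof (induction \<alpha> arbitrary: m)
  case Nil
  have "rgrid [] m \<subseteq> {0}" unfolding rgrid_def mpow_def by auto
  moreover have "rwo ({0}::'g set)" unfolding rwo_def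
  proof
    assume "\<exists>f. (\<forall>n. f n \<in> ({0}::'g set)) \<and> (\<forall>n. f n < f (Suc n))"
    then obtain f :: "nat \<Rightarrow> 'g" where "\<forall>n. f n \<in> {0}" "\<forall>n. f n < f (Suc n)" by blast
    then have "f 0 = 0" "f (Suc 0) = 0" "f 0 < f (Suc 0)" by auto
    then show False by simp
  qed
  ultimately show ?case using rwo_subset by metis
next
  case (Cons x \<alpha>)
  then have "x < 0" "ratio_set \<alpha>" unfolding ratio_set_def by auto
  have "rwo {a + b | a b. a \<in> {zmul k x | k. m 0 \<le> k} \<and> b \<in> rgrid \<alpha> (\<lambda>i. m (Suc i))}"
  proof (rule rwo_plus)
    show "rwo {zmul k x | k. m 0 \<le> k}" using \<open>x < 0\<close> by (rule rwo_gen)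
    show "rwo (rgrid \<alpha> (\<lambda>i. m (Suc i)))" using \<open>ratio_set \<alpha>\<close> by (rule Cons.IH)
  qed
  then show ?case by (rule rwo_subset[OF _ rgrid_Cons_sub])
qed

lemma ingrid_rwo: "ratio_set \<alpha> \<Longrightarrow> ingrid \<alpha> A \<Longrightarrow> rwo A"
proof -
  assume "ratio_set \<alpha>" "ingrid \<alpha> A"
  then obtain m where "A \<subseteq> rgrid \<alpha> m" unfolding ingrid_def by blast
  then show "rwo A" using rwo_rgrid[OF \<open>ratio_set \<alpha>\<close>, of m] by (rule rwo_subset[rotated])
qed

lemma finite_fiber:
  fixes A B :: "'g::linordered_ab_group_add set"
  assumes A: "rwo A" and B: "rwo B"
  shows "finite {a \<in> A. g - a \<in> B}"
proof (rule ccontr)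
  assume "infinite {a \<in> A. g - a \<in> B}"
  then obtain f :: "nat \<Rightarrow> 'g" where f: "inj f" "range f \<subseteq> {a \<in> A. g - a \<in> B}"
    using infinite_countable_subset by blast
  obtain r where r: "strict_mono r" "monoseq (\<lambda>n. f (r n))" using seq_monosub by blast
  have ne: "f (r n) \<noteq> f (r (Suc n))" for n
  proof
    assume "f (r n) = f (r (Suc n))"
    then have "r n = r (Suc n)" using f(1) unfolding inj_def by blast
    moreover have "r n < r (Suc n)" using r(1) by (simp add: strict_mono_def)
    ultimately show False by simp
  qed
  from r(2) show False unfolding monoseq_def
  proof
    assume "\<forall>m. \<forall>n\<ge>m. f (r m) \<le> f (r n)"
    then have "f (r n) < f (r (Suc n))" for n using ne[of n] by (simp add: order_le_neq_trans)
    then have "\<exists>f'. (\<forall>n. f' n \<in> A) \<and> (\<forall>n. f' n < f' (Suc n))"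
      using f(2) by (intro exI[of _ "\<lambda>n. f (r n)"]) blast
    then show False using A unfolding rwo_def by blast
  next
    assume "\<forall>m. \<forall>n\<ge>m. f (r n) \<le> f (r m)"
    then have le: "f (r (Suc n)) \<le> f (r n)" for n by simp
    have "f (r (Suc n)) < f (r n)" for n using le[of n] ne[of n] by (simp add: order_le_neq_trans)
    then have "g - f (r n) < g - f (r (Suc n))" for n by simp
    moreover have "g - f (r n) \<in> B" for n using f(2) by blast
    ultimately have "\<exists>f'. (\<forall>n. f' n \<in> B) \<and> (\<forall>n. f' n < f' (Suc n))"
      by (intro exI[of _ "\<lambda>n. g - f (r n)"]) blast
    then show False using B unfolding rwo_def by blast
  qed
qed


definition Ls :: "('g::ab_group_add \<Rightarrow> ('g \<Rightarrow> real)) \<Rightarrow> 'g \<Rightarrow> 'g set" where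
  "Ls d x = {h. d x (h + x) \<noteq> 0}"

lemma md_leib:
  assumes "monomial_derivation d"
  shows "d (m + n) g = d m (g - n) + d n (g - m)"
  using assms unfolding monomial_derivation_def shift_def by blast

lemma md_L_add:
  assumes "monomial_derivation d"
  shows "d (x + y) (h + (x + y)) = d x (h + x) + d y (h + y)"
proof -
  have "d (x + y) (h + (x + y)) = d x (h + (x + y) - y) + d y (h + (x + y) - x)"
    by (rule md_leib[OF assms])
  moreover have "h + (x + y) - y = h + x" "h + (x + y) - x = h + y" by (simp_all add: algebra_simps)
  ultimately show ?thesis by simp
qed

lemma md_zero:
  assumes "monomial_derivation d"
  shows "d 0 g = 0"
  using md_leib[OF assms, of 0 0 g] by simp

lemma Ls_0: "monomial_derivation d \<Longrightarrow> Ls d 0 = {}"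
proof -
  assume md: "monomial_derivation d"
  show ?thesis unfolding Ls_def using md_zero[OF md] by simp
qed

lemma Ls_add: "monomial_derivation d \<Longrightarrow> Ls d (x + y) \<subseteq> Ls d x \<union> Ls d y"
proof
  fix h assume md: "monomial_derivation d" and h: "h \<in> Ls d (x + y)"
  have "d (x + y) (h + (x + y)) = d x (h + x) + d y (h + y)" by (rule md_L_add[OF md])
  then show "h \<in> Ls d x \<union> Ls d y" using h unfolding Ls_def by auto
qed

lemma Ls_neg:
  assumes "monomial_derivation d"
  shows "Ls d (- x) \<subseteq> Ls d x"
proof
  fix h assume "h \<in> Ls d (- x)"
  then have "d (-x) (h + - x) \<noteq> 0" unfolding Ls_def by simp
  moreover have "d (x + - x) (h + (x + - x)) = d x (h + x) + d (-x) (h + - x)"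
    by (rule md_L_add[OF assms])
  moreover have "d (x + - x) (h + (x + - x)) = 0" using md_zero[OF assms] by simp
  ultimately show "h \<in> Ls d x" unfolding Ls_def by auto
qed

lemma Ls_nm: "monomial_derivation d \<Longrightarrow> Ls d (nm n x) \<subseteq> Ls d x"
proof (induction n)
  case 0 then have "Ls d 0 = {}" by (rule Ls_0)
  then show ?case by simp
next
  case (Suc n)
  have "Ls d (nm (Suc n) x) \<subseteq> Ls d (nm n x) \<union> Ls d x"
    using Ls_add[OF Suc.prems, of "nm n x" x] by simp
  then show ?case using Suc.IH[OF Suc.prems] by blast
qed

lemma Ls_zmul: "monomial_derivation d \<Longrightarrow> Ls d (zmul k x) \<subseteq> Ls d x"
proof -
  assume md: "monomial_derivation d"
  show ?thesis
  proof (cases "0 \<le> k")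
    case True then show ?thesis using Ls_nm[OF md] by (simp add: zmul_nm)
  next
    case False then show ?thesis using Ls_nm[OF md, of "nat (-k)" x] Ls_neg[OF md, of "nm (nat (-k)) x"]
      by (simp add: zmul_nm)
  qed
qed

lemma Ls_sum:
  assumes md: "monomial_derivation d"
  shows "Ls d (sum f A) \<subseteq> (\<Union>a\<in>A. Ls d (f a))"
proof (induction A rule: infinite_finite_induct)
  case (infinite A) then show ?case using Ls_0[OF md] by simp
next
  case empty then show ?case using Ls_0[OF md] by simp
next
  case (insert a A)
  have "Ls d (sum f (insert a A)) \<subseteq> Ls d (f a) \<union> Ls d (sum f A)"
    using Ls_add[OF md, of "f a" "sum f A"] insert.hyps by simp
  then show ?case using insert.IH by blast
qed

lemma Ls_mpow:
  assumes md: "monomial_derivation d"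
  shows "Ls d (mpow \<mu> k) \<subseteq> (\<Union>j<length \<mu>. Ls d (\<mu> ! j))"
proof -
  have "Ls d (mpow \<mu> k) \<subseteq> (\<Union>j<length \<mu>. Ls d (zmul (k j) (\<mu> ! j)))"
    unfolding mpow_def by (rule Ls_sum[OF md])
  also have "\<dots> \<subseteq> (\<Union>j<length \<mu>. Ls d (\<mu> ! j))"
    using Ls_zmul[OF md] by (intro UN_mono) auto
  finally show ?thesis .
qed

lemma supp_Ls: "g \<in> supp (d x) \<Longrightarrow> g - x \<in> Ls d x"
  unfolding supp_def Ls_def by simp

lemma supp_sderiv:
  assumes "g \<in> supp (sderiv d T)" shows "\<exists>m\<in>supp T. d m g \<noteq> 0"
proof -
  have "(\<Sum>m\<in>{m. m \<in> supp T \<and> d m g \<noteq> 0}. T m * d m g) \<noteq> 0"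
    using assms unfolding supp_def sderiv_def by simp
  then obtain m where "m \<in> {m. m \<in> supp T \<and> d m g \<noteq> 0}"
    using sum.not_neutral_contains_not_neutral by blast
  then show ?thesis by blast
qed

theorem proposition4p7:
  fixes d :: "'g::linordered_ab_group_add \<Rightarrow> ('g \<Rightarrow> real)"
    and \<mu> \<alpha> :: "'g list"
    and T :: "'i \<Rightarrow> 'g \<Rightarrow> real"
    and I :: "'i set"
  assumes "monomial_derivation d"
    and "ratio_set \<mu>"
    and "derivative_addendum d \<mu> \<alpha>"
    and "ratio_convergent \<mu> T I"
  shows "ratio_convergent \<alpha> (\<lambda>i. sderiv d (T i)) I"
proof -
  note md = assms(1)
  obtain mg where mg: "\<forall>i\<in>I. supp (T i) \<subseteq> rgrid \<mu> mg"
    and pf: "\<forall>g. finite {i\<in>I. g \<in> supp (T i)}"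
    using assms(4) unfolding ratio_convergent_def by blast
  have ra: "ratio_set \<alpha>" and mus: "set \<mu> \<subseteq> rstar \<alpha>"
    and gen: "\<forall>m\<in>rgroup \<mu>. generates \<alpha> (d m)"
    using assms(3) unfolding derivative_addendum_def by auto
  have "\<forall>j<length \<mu>. \<exists>c. \<mu> ! j = mpow \<alpha> c \<and> (\<forall>i<length \<alpha>. 0 \<le> c i)"
  proof (intro allI impI)
    fix j assume "j < length \<mu>"
    then have "\<mu> ! j \<in> rstar \<alpha>" using mus nth_mem by blast
    then show "\<exists>c. \<mu> ! j = mpow \<alpha> c \<and> (\<forall>i<length \<alpha>. 0 \<le> c i)"
      unfolding rstar_def by blast
  qed
  then obtain c where c: "\<And>j. j < length \<mu> \<Longrightarrow> \<mu> ! j = mpow \<alpha> (c j) \<and> (\<forall>i<length \<alpha>. 0 \<le> c j i)"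
    by metis
  define G where "G = rgrid \<mu> mg"
  define S where "S = (\<Union>j<length \<mu>. Ls d (\<mu> ! j))"
  have GS: "G \<subseteq> rgrid \<alpha> (\<lambda>i. \<Sum>j\<in>{..<length \<mu>}. mg j * c j i)"
  proof
    fix g assume "g \<in> G"
    then obtain k where k: "g = mpow \<mu> k" "\<forall>j<length \<mu>. mg j \<le> k j"
      unfolding G_def rgrid_def by blast
    have "g = (\<Sum>j<length \<mu>. zmul (k j) (mpow \<alpha> (c j)))"
      unfolding k(1) mpow_def[of \<mu>] using c by (intro sum.cong) auto
    moreover have "\<forall>j\<in>{..<length \<mu>}. zmul (k j) (mpow \<alpha> (c j)) \<in> rgrid \<alpha> (\<lambda>i. mg j * c j i)"
    proof
      fix j assume "j \<in> {..<length \<mu>}"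
      then show "zmul (k j) (mpow \<alpha> (c j)) \<in> rgrid \<alpha> (\<lambda>i. mg j * c j i)"
        using c[of j] k(2) by (intro zmul_rstar_rgrid) auto
    qed
    ultimately show "g \<in> rgrid \<alpha> (\<lambda>i. \<Sum>j\<in>{..<length \<mu>}. mg j * c j i)"
      using sum_rgrid[of "{..<length \<mu>}"] by simp
  qed
  then have Gi: "ingrid \<alpha> G" unfolding ingrid_def by blast
  have Si: "ingrid \<alpha> S"
    unfolding S_def
  proof (rule ingrid_UN)
    fix j assume j: "j \<in> {..<length \<mu>}"
    then have "\<mu> ! j \<in> rgroup \<mu>" unfolding rgroup_def using mpow_unit[of j \<mu>] by (metis (mono_tags, lifting) lessThan_iff mem_Collect_eq)
    then have "ingrid \<alpha> (supp (d (\<mu> ! j)))" using gen unfolding generates_def ingrid_def by blast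
    then have "ingrid \<alpha> ((\<lambda>g. g + mpow \<alpha> (\<lambda>i. - c j i)) ` supp (d (\<mu> ! j)))"
      by (rule ingrid_translate)
    moreover have "Ls d (\<mu> ! j) \<subseteq> (\<lambda>g. g + mpow \<alpha> (\<lambda>i. - c j i)) ` supp (d (\<mu> ! j))"
    proof
      fix h assume "h \<in> Ls d (\<mu> ! j)"
      then have "h + \<mu> ! j \<in> supp (d (\<mu> ! j))" unfolding Ls_def supp_def by simp
      moreover have "mpow \<alpha> (\<lambda>i. - c j i) = - (\<mu> ! j)" using c j by (simp add: mpow_neg)
      moreover have "h = (h + \<mu> ! j) + - (\<mu> ! j)" by simp
      ultimately show "h \<in> (\<lambda>g. g + mpow \<alpha> (\<lambda>i. - c j i)) ` supp (d (\<mu> ! j))"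
        by (simp add: rev_image_eqI)
    qed
    ultimately show "ingrid \<alpha> (Ls d (\<mu> ! j))" by (rule ingrid_subset)
  qed simp
  obtain mH where mH: "{a + b | a b. a \<in> G \<and> b \<in> S} \<subseteq> rgrid \<alpha> mH"
    using ingrid_plus[OF Gi Si] unfolding ingrid_def by blast
  have key: "\<exists>m\<in>supp (T i). m \<in> G \<and> g - m \<in> S"
    if i: "i \<in> I" and g: "g \<in> supp (sderiv d (T i))" for i g
  proof -
    obtain m where m: "m \<in> supp (T i)" "d m g \<noteq> 0" using supp_sderiv[OF g] by blast
    then have mG: "m \<in> G" using mg i unfolding G_def by blast
    then obtain k where k: "m = mpow \<mu> k" unfolding G_def rgrid_def by blast
    have "g - m \<in> Ls d m" using m(2) by (intro supp_Ls) (simp add: supp_def)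
    then have "g - m \<in> S" using Ls_mpow[OF md, of \<mu> k] k unfolding S_def by blast
    then show ?thesis using m mG by blast
  qed
  have part1: "\<forall>i\<in>I. supp (sderiv d (T i)) \<subseteq> rgrid \<alpha> mH"
  proof (intro ballI subsetI)
    fix i g assume "i \<in> I" "g \<in> supp (sderiv d (T i))"
    then obtain m where m: "m \<in> G" "g - m \<in> S" using key by blast
    have "g = m + (g - m)" by simp
    then have "g \<in> {a + b | a b. a \<in> G \<and> b \<in> S}" using m by blast
    then show "g \<in> rgrid \<alpha> mH" using mH by (rule subsetD[rotated])
  qed
  have part2: "finite {i\<in>I. g \<in> supp (sderiv d (T i))}" for g
  proof -
    have fin: "finite {a \<in> G. g - a \<in> S}"
      by (rule finite_fiber[OF ingrid_rwo[OF ra Gi] ingrid_rwo[OF ra Si]])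
    have "{i\<in>I. g \<in> supp (sderiv d (T i))} \<subseteq> (\<Union>a\<in>{a \<in> G. g - a \<in> S}. {i\<in>I. a \<in> supp (T i)})"
    proof
      fix i assume "i \<in> {i\<in>I. g \<in> supp (sderiv d (T i))}"
      then have i: "i \<in> I" "g \<in> supp (sderiv d (T i))" by auto
      then obtain m where "m \<in> supp (T i)" "m \<in> G" "g - m \<in> S" using key by blast
      then show "i \<in> (\<Union>a\<in>{a \<in> G. g - a \<in> S}. {i\<in>I. a \<in> supp (T i)})" using i by blast
    qed
    moreover have "finite (\<Union>a\<in>{a \<in> G. g - a \<in> S}. {i\<in>I. a \<in> supp (T i)})"
      using fin pf by (intro finite_UN_I) auto
    ultimately show ?thesis using finite_subset by blast
  qed
  show ?thesis unfolding ratio_convergent_def using part1 part2 by blast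
qed

end
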